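(* Let $\mathfrak L=\mathbb V\oplus\mathbb W$ be a color gLt-algebra admitting a quasi-multiplicative basis $\mathfrak B=\{e_i\}_{i\in I}$ of $\mathbb W\neq0$. Suppose $\mathfrak B$ is a $\mu$-quasi-multiplicative basis and $\mathbb V$ is tight. Then $\mathfrak L$ is minimal if and only if all elements of $I$ are connected to each other.
   Context: Let $\mathbb F$ be a field, $\mathbb G$ an abelian group, $n\ge 2$, and $\epsilon:\mathbb G\times\mathbb G\to\mathbb F\setminus\{0\}$ a bicharacter ($\epsilon(k,g+h)=\epsilon(k,g)\epsilon(k,h)$, $\epsilon(g+h,k)=\epsilon(g,k)\epsilon(h,k)$, $\epsilon(g,h)\epsilon(h,g)=1$). A graded $n$-ary algebra is a $\mathbb G$-graded vector space $\mathfrak L=\bigoplus_{g\in\mathbb G}\mathfrak L_g$ with an $n$-linear map $\langle\cdot,\dots,\cdot\rangle:\mathfrak L^n\to\mathfrak L$ such that $\langle\mathfrak L_{g_1},\dots,\mathfrak L_{g_n}\rangle\subset\mathfrak L_{g_1+\dots+g_n}$. For $\sigma\in\mathbb S_n$ write $\langle x_1,\dots,x_n\rangle_\sigma:=\langle x_{\sigma(1)},\dots,x_{\sigma(n)}\rangle$; for subsets $A_1,\dots,A_n$, $\langle A_1,\dots,A_n\rangle_\sigma$ denotes the linear span of all $\langle x_1,\dots,x_n\rangle_\sigma$ with $x_r\in A_r$. A color gLt-algebra is a graded $n$-ary algebra satisfying, for each $k=1,\dots,n$ and fixed scalars $\alpha^{\sigma_1,\sigma_2}_{i,j,k}\in\mathbb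 F$, the color version (each term on the right multiplied by the product of values of $\epsilon$ on the degrees of the homogeneous arguments transposed in passing from the left-hand order to the order of that term) of the identity $\langle y_1,\dots,y_{k-1},\langle x_1,\dots,x_n\rangle,y_k,\dots,y_{n-1}\rangle=\sum_{1\le i,j\le n,\,\sigma_1\in\mathbb S_n,\,\sigma_2\in\mathbb S_{n-1}}\alpha^{\sigma_1,\sigma_2}_{i,j,k}\langle x_{\sigma_1(1)},\dots,x_{\sigma_1(i-1)},\langle y_{\sigma_2(1)},\dots,y_{\sigma_2(j-1)},x_{\sigma_1(i)},y_{\sigma_2(j)},\dots,y_{\sigma_2(n-1)}\rangle,x_{\sigma_1(i+1)},\dots,x_{\sigma_1(n)}\rangle$. A $\mathbb G$-graded subspace $\mathcal I\subset\mathfrak L$ is a color gLt-ideal if $\langle\mathcal I,\mathfrak L,\dots,\mathfrak L\rangle_\sigma\subset\mathcal I$ for every $\sigma\in\mathbb S_n$. $\mathfrak L$ admits a quasi-multiplicative basis if $\mathfrak L=\mathbb V\oplus\mathbb W$ with $\mathbb V$, $\mathbb W\ne0$ graded subspaces and $\mathfrak B=\{e_i\}_{i\in I}$ a basis of homogeneous elements of $\mathbb W$ such that: (1) for $i_1,\dots,i_n\in I$, either $\langle e_{i_1},\dots,e_{i_n}\rangle\in\mathbb Fe_j$ for some $j\in I$ or $\langle e_{i_1},\dots,e_{i_n}\rangle\in\mathbb V$; (2) for $0<k<n$, $i_1,\dots,i_k\in I$ and $\sigma\in\mathbb S_n$, $\langle e_{i_1},\dots,e_{i_k},\mathbb V,\dots,\mathbb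 V\rangle_\sigma\subset\mathbb Fe_{j_\sigma}$ for some $j_\sigma\in I$; (3) either $\langle\mathbb V,\dots,\mathbb V\rangle\subset\mathbb Fe_j$ for some $j\in I$ or $\langle\mathbb V,\dots,\mathbb V\rangle\subset\mathbb V$. A color gLt-ideal $\mathfrak S$ admits a basis inherited by the one of $\mathfrak L$ if $\mathfrak S=\mathbb V_{\mathfrak S}\oplus\mathbb W_{\mathfrak S}$ with $\mathbb V_{\mathfrak S}$ a graded subspace of $\mathbb V$ and $0\ne\mathbb W_{\mathfrak S}$ a graded subspace of $\mathbb W$ admitting a subset $\mathfrak B'\subset\mathfrak B$ as a basis. $\mathfrak L$ is minimal if its only nonzero color gLt-ideal admitting a basis inherited by the one of $\mathfrak L$ is $\mathfrak L$ itself. Index maps: let $v$ be a symbol not in $I$, $\mathfrak I:=I\,\dot\cup\,\{v\}$; for each $j\in\mathfrak I$ take a new symbol $\overline j$, $\overline I:=\{\overline i:i\in I\}$, $\overline{\mathfrak I}:=\overline I\,\dot\cup\,\{\overline v\}$; set $\overline{(\overline j)}:=j$, $\overline J:=\{\overline j:j\in J\}$ for a set $J$ of symbols ($\overline\emptyset=\emptyset$). Put $u_j:=e_j$ for $j\in I$ and $u_v:=\mathbb V$. For $\sigma\in\mathbb S_n$ and $(j_1,\dots,j_n)\in\mathfrak I^n$ let $a_\sigma(j_1,\dots,j_n)=\{r\}$ if $r\in I$ and $0\ne\langle u_{j_1},\dots,u_{j_n}\rangle_\sigma\subset\mathbb Fe_r$, $=\{v\}$ if $0\ne\langle u_{j_1},\dots,u_{j_n}\rangle_\sigma\subset\mathbb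 V$, and $=\emptyset$ otherwise. For $j,j_2,\dots,j_n\in\mathfrak I$ let $b_\sigma(j,\overline j_2,\dots,\overline j_n):=\{x\in\mathfrak I: a_\sigma(x,j_2,\dots,j_n)=\{j\}\}$. Define $\mu$ on $(\mathfrak I\,\dot\cup\,\overline{\mathfrak I})\times(\mathfrak I^{n-1}\,\dot\cup\,\overline{\mathfrak I}^{n-1})$ with values subsets of $\mathfrak I$ by: $\mu(j,j_1,\dots,j_{n-1})=\bigcup_{\sigma\in\mathbb S_n}a_\sigma(j,j_1,\dots,j_{n-1})$ for $j,j_1,\dots,j_{n-1}\in\mathfrak I$; $\mu(j,\overline j_1,\dots,\overline j_{n-1})=\bigcup_{\sigma\in\mathbb S_n}b_\sigma(j,\overline j_1,\dots,\overline j_{n-1})$ for $j,j_1,\dots,j_{n-1}\in\mathfrak I$; $\mu(\overline j,j_1,\dots,j_{n-1})=\bigcup_{1\le k\le n-1,\ \sigma\in\mathbb S_n}b_\sigma(j_k,\overline j,\overline j_1,\dots,\overline j_{k-1},\overline j_{k+1},\dots,\overline j_{n-1})$ for $j,j_1,\dots,j_{n-1}\in\mathfrak I$; and $\mu(\overline j,\overline j_1,\dots,\overline j_{n-1})=\emptyset$. Define $\phi$ on pairs $(J,X)$ with $J\subset I\,\dot\cup\,\overline I$ and $X\in\mathfrak I^{n-1}\,\dot\cup\,\overline{\mathfrak I}^{n-1}$ by $\phi(\emptyset,X)=\emptyset$ and, for $J\ne\emptyset$, $\phi(J,X):=K\cup\overline K$ where $K:=\big(\bigcup_{j\in J}\mu(j,X)\big)\setminus\{v\}$.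 $\mathbb V$ is tight if $\mathbb V=\{0\}$ or $\mathbb V=\sum\{\mathbb F\langle e_{i_1},\dots,e_{i_n}\rangle: i_1,\dots,i_n\in I,\ \mu(i_1,\dots,i_n)=\{v\}\}$. The basis $\mathfrak B$ is $\mu$-quasi-multiplicative if whenever $i\in I$, $k_1\in\mathfrak I\,\dot\cup\,\overline{\mathfrak I}$ and $(k_2,\dots,k_n)\in\mathfrak I^{n-1}\,\dot\cup\,\overline{\mathfrak I}^{n-1}$ satisfy $i\in\mu(k_1,k_2,\dots,k_n)$, then $e_i\in\langle w_{k_1},\dots,w_{k_n}\rangle_\sigma$ (linear span) for some $\sigma\in\mathbb S_n$, where $w_k:=e_j$ if $k\in\{j,\overline j\}$ with $j\in I$, and $w_k:=\mathbb V$ if $k\in\{v,\overline v\}$. Connections: for distinct $i,j\in I$, $i$ is connected to $j$ if there exist $t\ge1$, $X_1,\dots,X_t\in\mathfrak I^{n-1}\,\dot\cup\,\overline{\mathfrak I}^{n-1}$ and $\widetilde i\in\{i,\overline i\}$ such that $\phi(\{\widetilde i\},X_1)\ne\emptyset$, …, $\phi(\cdots\phi(\{\widetilde i\},X_1)\cdots,X_{t-1})\ne\emptyset$, and $j\in\phi(\cdots\phi(\phi(\{\widetilde i\},X_1),X_2)\cdots,X_t)$; every $i$ is connected to itself. *)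

theory Defs
  imports Complex_Main "HOL-Combinatorics.Permutations"
begin

definition graded_space :: "('f::field \<Rightarrow> 'v::ab_group_add \<Rightarrow> 'v) \<Rightarrow> ('g \<Rightarrow> 'v set) \<Rightarrow> bool" where
  "graded_space scale Lg \<longleftrightarrow>
     vector_space scale \<and>
     (\<forall>g. module.subspace scale (Lg g)) \<and>
     module.span scale (\<Union>g. Lg g) = UNIV \<and>
     (\<forall>g. Lg g \<inter> module.span scale (\<Union>h\<in>-{g}. Lg h) = {0})"

definition graded_subspace :: "('f::field \<Rightarrow> 'v::ab_group_add \<Rightarrow> 'v) \<Rightarrow> ('g \<Rightarrow> 'v set) \<Rightarrow> 'v set \<Rightarrow> bool" where
  "graded_subspace scale Lg S \<longleftrightarrow>
     module.subspace scale S \<and> S = module.span scale (\<Union>g. S \<inter> Lg g)"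

definition bicharacter :: "('g::ab_group_add \<Rightarrow> 'g \<Rightarrow> 'f::field) \<Rightarrow> bool" where
  "bicharacter eps \<longleftrightarrow>
     (\<forall>g h. eps g h \<noteq> 0) \<and>
     (\<forall>k g h. eps k (g + h) = eps k g * eps k h) \<and>
     (\<forall>k g h. eps (g + h) k = eps g k * eps h k) \<and>
     (\<forall>g h. eps g h * eps h g = 1)"

section \<open>Graded n-ary algebras (arguments as lists of length n, positions 0..n-1)\<close>

definition graded_nary_algebra ::
  "('f::field \<Rightarrow> 'v::ab_group_add \<Rightarrow> 'v) \<Rightarrow> ('g::ab_group_add \<Rightarrow> 'v set) \<Rightarrow> nat \<Rightarrow> ('v list \<Rightarrow> 'v) \<Rightarrow> bool" where
  "graded_nary_algebra scale Lg n mul \<longleftrightarrow>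
     graded_space scale Lg \<and>
     (\<forall>xs r. length xs = n \<longrightarrow> r < n \<longrightarrow>
        Vector_Spaces.linear scale scale (\<lambda>x. mul (xs[r := x]))) \<and>
     (\<forall>xs gs. length xs = n \<longrightarrow> length gs = n \<longrightarrow> (\<forall>r<n. xs ! r \<in> Lg (gs ! r)) \<longrightarrow>
        mul xs \<in> Lg (sum_list gs))"

definition perm_list :: "(nat \<Rightarrow> nat) \<Rightarrow> 'a list \<Rightarrow> 'a list" where
  "perm_list s xs = map (\<lambda>t. xs ! s t) [0..<length xs]"

text \<open>Color (Koszul) factor: ds are the degrees of the arguments in the left-hand order
  (labels 0..m-1), ord is the list of labels in the order of the term; for every pair of
  arguments whose relative order is reversed we multiply by eps(degree of the one that
  was first, degree of the one that was second).\<close>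
definition koszul :: "('g \<Rightarrow> 'g \<Rightarrow> 'f::field) \<Rightarrow> 'g list \<Rightarrow> nat list \<Rightarrow> 'f" where
  "koszul eps ds ord =
     (\<Prod>p\<in>{(a, b). a < b \<and> b < length ord \<and> ord ! b < ord ! a}.
        eps (ds ! (ord ! snd p)) (ds ! (ord ! fst p)))"

text \<open>Order of the labels in the term of the right-hand side indexed by i, j, s1, s2,
  when the inner product sits at position k (0-based) of the left-hand side.
  Labels of the left-hand side: y_t has label t if t < k and t + n otherwise; x_s has label k + s.\<close>
definition rhs_order :: "nat \<Rightarrow> nat \<Rightarrow> nat \<Rightarrow> nat \<Rightarrow> (nat \<Rightarrow> nat) \<Rightarrow> (nat \<Rightarrow> nat) \<Rightarrow> nat list" where
  "rhs_order n k i j s1 s2 =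
     (let xl = (\<lambda>s. k + s); yl = (\<lambda>t. if t < k then t else t + n);
          L1 = map s1 [0..<n]; L2 = map s2 [0..<n - 1]
      in map xl (take i L1) @ map yl (take j L2) @ [xl (L1 ! i)] @ map yl (drop j L2)
         @ map xl (drop (Suc i) L1))"

definition color_gLt_algebra ::
  "('f::field \<Rightarrow> 'v::ab_group_add \<Rightarrow> 'v) \<Rightarrow> ('g::ab_group_add \<Rightarrow> 'v set) \<Rightarrow> ('g \<Rightarrow> 'g \<Rightarrow> 'f)
   \<Rightarrow> nat \<Rightarrow> ('v list \<Rightarrow> 'v) \<Rightarrow> (nat \<Rightarrow> nat \<Rightarrow> nat \<Rightarrow> (nat \<Rightarrow> nat) \<Rightarrow> (nat \<Rightarrow> nat) \<Rightarrow> 'f) \<Rightarrow> bool" where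
  "color_gLt_algebra scale Lg eps n mul alpha \<longleftrightarrow>
     2 \<le> n \<and> bicharacter eps \<and> graded_nary_algebra scale Lg n mul \<and>
     (\<forall>k<n. \<forall>xs dxs ys dys.
        length xs = n \<and> length dxs = n \<and> length ys = n - 1 \<and> length dys = n - 1 \<and>
        (\<forall>t<n. xs ! t \<in> Lg (dxs ! t)) \<and> (\<forall>t<n - 1. ys ! t \<in> Lg (dys ! t)) \<longrightarrow>
        mul (take k ys @ [mul xs] @ drop k ys) =
        (\<Sum>i<n. \<Sum>j<n. \<Sum>s1\<in>{s. s permutes {..<n}}. \<Sum>s2\<in>{s. s permutes {..<n - 1}}.
           scale (alpha i j k s1 s2 * koszul eps (take k dys @ dxs @ drop k dys) (rhs_order n k i j s1 s2))
             (let xs' = perm_list s1 xs; ys' = perm_list s2 ys in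
              mul (take i xs' @ [mul (take j ys' @ [xs' ! i] @ drop j ys')] @ drop (Suc i) xs'))))"

text \<open>Span of all products with the arguments permuted by s, the r-th argument ranging over As ! r
  (this is the notation of the paper with 0-based positions).\<close>
definition bracket_set :: "('f::field \<Rightarrow> 'v::ab_group_add \<Rightarrow> 'v) \<Rightarrow> nat \<Rightarrow> ('v list \<Rightarrow> 'v)
    \<Rightarrow> 'v set list \<Rightarrow> (nat \<Rightarrow> nat) \<Rightarrow> 'v set" where
  "bracket_set scale n mul As s =
     module.span scale {mul (perm_list s xs) | xs. length xs = n \<and> (\<forall>r<n. xs ! r \<in> As ! r)}"

definition gLt_ideal :: "('f::field \<Rightarrow> 'v::ab_group_add \<Rightarrow> 'v) \<Rightarrow> ('g \<Rightarrow> 'v set) \<Rightarrow> nat \<Rightarrow> ('v list \<Rightarrow> 'v) \<Rightarrow> 'v set \<Rightarrow> bool" where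
  "gLt_ideal scale Lg n mul S \<longleftrightarrow>
     graded_subspace scale Lg S \<and>
     (\<forall>s. s permutes {..<n} \<longrightarrow> bracket_set scale n mul (S # replicate (n - 1) UNIV) s \<subseteq> S)"

section \<open>Quasi-multiplicative bases; the index set I is the type 'i\<close>

definition line :: "('f::field \<Rightarrow> 'v::ab_group_add \<Rightarrow> 'v) \<Rightarrow> 'v \<Rightarrow> 'v set" where
  "line scale x = range (\<lambda>c. scale c x)"

definition quasi_mult_basis ::
  "('f::field \<Rightarrow> 'v::ab_group_add \<Rightarrow> 'v) \<Rightarrow> ('g \<Rightarrow> 'v set) \<Rightarrow> nat \<Rightarrow> ('v list \<Rightarrow> 'v)
    \<Rightarrow> 'v set \<Rightarrow> 'v set \<Rightarrow> ('i \<Rightarrow> 'v) \<Rightarrow> bool" where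
  "quasi_mult_basis scale Lg n mul V W e \<longleftrightarrow>
     graded_subspace scale Lg V \<and> graded_subspace scale Lg W \<and> W \<noteq> {0} \<and>
     V \<inter> W = {0} \<and> {v + w | v w. v \<in> V \<and> w \<in> W} = UNIV \<and>
     inj e \<and> \<not> module.dependent scale (range e) \<and> module.span scale (range e) = W \<and>
     (\<forall>i. \<exists>g. e i \<in> Lg g) \<and>
     (\<forall>is. length is = n \<longrightarrow>
        (\<exists>j. mul (map e is) \<in> line scale (e j)) \<or> mul (map e is) \<in> V) \<and>
     (\<forall>k is s. 0 < k \<and> k < n \<and> length is = k \<and> s permutes {..<n} \<longrightarrow>
        (\<exists>j. bracket_set scale n mul (map (\<lambda>i. {e i}) is @ replicate (n - k) V) s
               \<subseteq> line scale (e j))) \<and>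
     ((\<exists>j. bracket_set scale n mul (replicate n V) id \<subseteq> line scale (e j)) \<or>
      bracket_set scale n mul (replicate n V) id \<subseteq> V)"

text \<open>Ix i stands for i \<in> I, Vx for the new symbol v; Pl and Br distinguish j and its bar.\<close>
datatype 'i ix = Ix 'i | Vx
datatype 'a br = Pl 'a | Br 'a

fun u_set :: "'v set \<Rightarrow> ('i \<Rightarrow> 'v) \<Rightarrow> 'i ix \<Rightarrow> 'v set" where
  "u_set V e (Ix i) = {e i}"
| "u_set V e Vx = V"

definition a_map :: "('f::field \<Rightarrow> 'v::ab_group_add \<Rightarrow> 'v) \<Rightarrow> nat \<Rightarrow> ('v list \<Rightarrow> 'v) \<Rightarrow> 'v set \<Rightarrow> ('i \<Rightarrow> 'v)
    \<Rightarrow> (nat \<Rightarrow> nat) \<Rightarrow> 'i ix list \<Rightarrow> 'i ix set" where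
  "a_map scale n mul V e s js =
     (let B = bracket_set scale n mul (map (u_set V e) js) s in
       {Ix r | r. B \<noteq> {0} \<and> B \<subseteq> line scale (e r)} \<union> (if B \<noteq> {0} \<and> B \<subseteq> V then {Vx} else {}))"

definition b_map :: "('f::field \<Rightarrow> 'v::ab_group_add \<Rightarrow> 'v) \<Rightarrow> nat \<Rightarrow> ('v list \<Rightarrow> 'v) \<Rightarrow> 'v set \<Rightarrow> ('i \<Rightarrow> 'v)
    \<Rightarrow> (nat \<Rightarrow> nat) \<Rightarrow> 'i ix \<Rightarrow> 'i ix list \<Rightarrow> 'i ix set" where
  "b_map scale n mul V e s j js = {x. a_map scale n mul V e s (x # js) = {j}}"

fun mu :: "('f::field \<Rightarrow> 'v::ab_group_add \<Rightarrow> 'v) \<Rightarrow> nat \<Rightarrow> ('v list \<Rightarrow> 'v) \<Rightarrow> 'v set \<Rightarrow> ('i \<Rightarrow> 'v)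
    \<Rightarrow> 'i ix br \<Rightarrow> 'i ix list br \<Rightarrow> 'i ix set" where
  "mu scale n mul V e (Pl j) (Pl js) = (\<Union>s\<in>{s. s permutes {..<n}}. a_map scale n mul V e s (j # js))"
| "mu scale n mul V e (Pl j) (Br js) = (\<Union>s\<in>{s. s permutes {..<n}}. b_map scale n mul V e s j js)"
| "mu scale n mul V e (Br j) (Pl js) =
     (\<Union>k<n - 1. \<Union>s\<in>{s. s permutes {..<n}}.
        b_map scale n mul V e s (js ! k) (j # take k js @ drop (Suc k) js))"
| "mu scale n mul V e (Br j) (Br js) = {}"

fun br_ix :: "'i br \<Rightarrow> 'i ix br" where
  "br_ix (Pl i) = Pl (Ix i)"
| "br_ix (Br i) = Br (Ix i)"

definition phi :: "('f::field \<Rightarrow> 'v::ab_group_add \<Rightarrow> 'v) \<Rightarrow> nat \<Rightarrow> ('v list \<Rightarrow> 'v) \<Rightarrow> 'v set \<Rightarrow> ('i \<Rightarrow> 'v)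
    \<Rightarrow> 'i br set \<Rightarrow> 'i ix list br \<Rightarrow> 'i br set" where
  "phi scale n mul V e J X =
     (if J = {} then {}
      else (let K = {i. Ix i \<in> (\<Union>j\<in>J. mu scale n mul V e (br_ix j) X)} in Pl ` K \<union> Br ` K))"

fun phi_iter :: "('f::field \<Rightarrow> 'v::ab_group_add \<Rightarrow> 'v) \<Rightarrow> nat \<Rightarrow> ('v list \<Rightarrow> 'v) \<Rightarrow> 'v set \<Rightarrow> ('i \<Rightarrow> 'v)
    \<Rightarrow> 'i br set \<Rightarrow> 'i ix list br list \<Rightarrow> 'i br set" where
  "phi_iter scale n mul V e J [] = J"
| "phi_iter scale n mul V e J (X # Xs) = phi_iter scale n mul V e (phi scale n mul V e J X) Xs"

text \<open>Admissible second arguments: elements of \<frak>I^{n-1} or of the barred copy.\<close>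
fun tuple_ok :: "nat \<Rightarrow> 'a list br \<Rightarrow> bool" where
  "tuple_ok n (Pl js) = (length js = n - 1)"
| "tuple_ok n (Br js) = (length js = n - 1)"

definition tight :: "('f::field \<Rightarrow> 'v::ab_group_add \<Rightarrow> 'v) \<Rightarrow> nat \<Rightarrow> ('v list \<Rightarrow> 'v) \<Rightarrow> 'v set \<Rightarrow> ('i \<Rightarrow> 'v) \<Rightarrow> bool" where
  "tight scale n mul V e \<longleftrightarrow>
     V = {0} \<or>
     V = module.span scale {mul (map e (i # is)) | i is. length is = n - 1 \<and>
                               mu scale n mul V e (Pl (Ix i)) (Pl (map Ix is)) = {Vx}}"

fun w_set :: "'v set \<Rightarrow> ('i \<Rightarrow> 'v) \<Rightarrow> 'i ix br \<Rightarrow> 'v set" where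
  "w_set V e (Pl k) = u_set V e k"
| "w_set V e (Br k) = u_set V e k"

fun unbar_list :: "'a list br \<Rightarrow> 'a br list" where
  "unbar_list (Pl js) = map Pl js"
| "unbar_list (Br js) = map Br js"

definition mu_quasi_mult :: "('f::field \<Rightarrow> 'v::ab_group_add \<Rightarrow> 'v) \<Rightarrow> nat \<Rightarrow> ('v list \<Rightarrow> 'v) \<Rightarrow> 'v set \<Rightarrow> ('i \<Rightarrow> 'v) \<Rightarrow> bool" where
  "mu_quasi_mult scale n mul V e \<longleftrightarrow>
     (\<forall>i k1 X. tuple_ok n X \<and> Ix i \<in> mu scale n mul V e k1 X \<longrightarrow>
        (\<exists>s. s permutes {..<n} \<and>
             e i \<in> bracket_set scale n mul (map (w_set V e) (k1 # unbar_list X)) s))"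

definition connected :: "('f::field \<Rightarrow> 'v::ab_group_add \<Rightarrow> 'v) \<Rightarrow> nat \<Rightarrow> ('v list \<Rightarrow> 'v) \<Rightarrow> 'v set \<Rightarrow> ('i \<Rightarrow> 'v)
    \<Rightarrow> 'i \<Rightarrow> 'i \<Rightarrow> bool" where
  "connected scale n mul V e i j \<longleftrightarrow>
     i = j \<or>
     (\<exists>Xs it. Xs \<noteq> [] \<and> (\<forall>X\<in>set Xs. tuple_ok n X) \<and> it \<in> {Pl i, Br i} \<and>
        (\<forall>s. 1 \<le> s \<and> s < length Xs \<longrightarrow> phi_iter scale n mul V e {it} (take s Xs) \<noteq> {}) \<and>
        Pl j \<in> phi_iter scale n mul V e {it} Xs)"

definition inherited_basis_ideal ::
  "('f::field \<Rightarrow> 'v::ab_group_add \<Rightarrow> 'v) \<Rightarrow> ('g \<Rightarrow> 'v set) \<Rightarrow> 'v set \<Rightarrow> 'v set \<Rightarrow> ('i \<Rightarrow> 'v) \<Rightarrow> 'v set \<Rightarrow> bool" where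
  "inherited_basis_ideal scale Lg V W e S \<longleftrightarrow>
     (\<exists>VS WS J. graded_subspace scale Lg VS \<and> VS \<subseteq> V \<and>
        graded_subspace scale Lg WS \<and> WS \<subseteq> W \<and> WS \<noteq> {0} \<and>
        WS = module.span scale (e ` J) \<and>
        VS \<inter> WS = {0} \<and> S = {v + w | v w. v \<in> VS \<and> w \<in> WS})"

definition minimal ::
  "('f::field \<Rightarrow> 'v::ab_group_add \<Rightarrow> 'v) \<Rightarrow> ('g \<Rightarrow> 'v set) \<Rightarrow> nat \<Rightarrow> ('v list \<Rightarrow> 'v)
    \<Rightarrow> 'v set \<Rightarrow> 'v set \<Rightarrow> ('i \<Rightarrow> 'v) \<Rightarrow> bool" where
  "minimal scale Lg n mul V W e \<longleftrightarrow>
     (\<forall>S. S \<noteq> {0} \<and> gLt_ideal scale Lg n mul S \<and> inherited_basis_ideal scale Lg V W e S \<longrightarrow> S = UNIV)"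

end

theory Submission
  imports Defs
begin

fun getI :: "'i ix \<Rightarrow> 'i" where "getI (Ix i) = i" | "getI Vx = undefined"

locale ctx =
  fixes scale :: "'f::field \<Rightarrow> 'v::ab_group_add \<Rightarrow> 'v"
    and Lg :: "'g::ab_group_add \<Rightarrow> 'v set"
    and eps :: "'g \<Rightarrow> 'g \<Rightarrow> 'f"
    and n :: nat
    and mul :: "'v list \<Rightarrow> 'v"
    and alpha :: "nat \<Rightarrow> nat \<Rightarrow> nat \<Rightarrow> (nat \<Rightarrow> nat) \<Rightarrow> (nat \<Rightarrow> nat) \<Rightarrow> 'f"
    and V W :: "'v set"
    and e :: "'i \<Rightarrow> 'v"
  assumes A1: "color_gLt_algebra scale Lg eps n mul alpha"
    and A2: "quasi_mult_basis scale Lg n mul V W e"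
    and A3: "mu_quasi_mult scale n mul V e"
    and A4: "tight scale n mul V e"
begin
lemma vsp: "vector_space scale" using A1 unfolding color_gLt_algebra_def graded_nary_algebra_def graded_space_def by blast
sublocale vs: vector_space scale by (rule vsp)
lemma n2: "2 \<le> n" using A1 unfolding color_gLt_algebra_def by blast
lemma lin: "length xs = n \<Longrightarrow> r < n \<Longrightarrow> Vector_Spaces.linear scale scale (\<lambda>x. mul (xs[r := x]))"
  using A1 unfolding color_gLt_algebra_def graded_nary_algebra_def by blast
lemma hom: "length xs = n \<Longrightarrow> length gs = n \<Longrightarrow> (\<forall>r<n. xs ! r \<in> Lg (gs ! r)) \<Longrightarrow> mul xs \<in> Lg (sum_list gs)"
  using A1 unfolding color_gLt_algebra_def graded_nary_algebra_def by blast
lemma ident: "k<n \<Longrightarrow> length xs = n \<Longrightarrow> length dxs = n \<Longrightarrow> length ys = n - 1 \<Longrightarrow> length dys = n - 1 \<Longrightarrow>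
        (\<forall>t<n. xs ! t \<in> Lg (dxs ! t)) \<Longrightarrow> (\<forall>t<n - 1. ys ! t \<in> Lg (dys ! t)) \<Longrightarrow>
        mul (take k ys @ [mul xs] @ drop k ys) =
        (\<Sum>i<n. \<Sum>j<n. \<Sum>s1\<in>{s. s permutes {..<n}}. \<Sum>s2\<in>{s. s permutes {..<n - 1}}.
           scale (alpha i j k s1 s2 * koszul eps (take k dys @ dxs @ drop k dys) (rhs_order n k i j s1 s2))
             (let xs' = perm_list s1 xs; ys' = perm_list s2 ys in
              mul (take i xs' @ [mul (take j ys' @ [xs' ! i] @ drop j ys')] @ drop (Suc i) xs')))"
  using A1 unfolding color_gLt_algebra_def by blast
lemma Vsub: "vs.subspace V" and Vgr: "V = vs.span (\<Union>g. V \<inter> Lg g)"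
  using A2 unfolding quasi_mult_basis_def graded_subspace_def by blast+
lemma Wsub: "vs.subspace W" using A2 unfolding quasi_mult_basis_def graded_subspace_def by blast
lemma VW0: "V \<inter> W = {0}" and VWU: "{v + w | v w. v \<in> V \<and> w \<in> W} = UNIV"
  and einj: "inj e" and eind: "\<not> vs.dependent (range e)" and espan: "vs.span (range e) = W"
  and ehom: "\<exists>g. e i \<in> Lg g"
  using A2 unfolding quasi_mult_basis_def by blast+
lemma q1: "length is = n \<Longrightarrow> (\<exists>j. mul (map e is) \<in> line scale (e j)) \<or> mul (map e is) \<in> V"
  using A2 unfolding quasi_mult_basis_def by blast
lemma q2: "0 < k \<Longrightarrow> k < n \<Longrightarrow> length is = k \<Longrightarrow> s permutes {..<n} \<Longrightarrow>
        (\<exists>j. bracket_set scale n mul (map (\<lambda>i. {e i}) is @ replicate (n - k) V) s \<subseteq> line scale (e j))"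
  using A2 unfolding quasi_mult_basis_def by blast
lemma perm_list_eq: "perm_list = permute_list" by (rule ext)+ (simp add: perm_list_def permute_list_def)
lemma line_span: "line scale x = vs.span {x}" by (simp add: line_def vs.span_singleton)
lemma e_ne0: "e i \<noteq> 0"
  using eind vs.dependent_zero by (metis rangeI)
lemma e_W: "e i \<in> W" using espan vs.span_base by blast
lemma e_notV: "e i \<notin> V" using VW0 e_W e_ne0 by blast

lemma bracket_mono: "length As = n \<Longrightarrow> length Bs = n \<Longrightarrow> (\<And>r. r < n \<Longrightarrow> As ! r \<subseteq> Bs ! r)
   \<Longrightarrow> bracket_set scale n mul As s \<subseteq> bracket_set scale n mul Bs s"
  unfolding bracket_set_def by (rule vs.span_mono) blast

lemma bracket_gen: "length xs = n \<Longrightarrow> (\<And>r. r < n \<Longrightarrow> xs ! r \<in> As ! r) \<Longrightarrow>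
   mul (perm_list s xs) \<in> bracket_set scale n mul As s"
  unfolding bracket_set_def by (rule vs.span_base) blast

lemma bracket_sub: "vs.subspace T \<Longrightarrow> (\<And>xs. length xs = n \<Longrightarrow> (\<forall>r<n. xs ! r \<in> As ! r) \<Longrightarrow> mul (perm_list s xs) \<in> T)
   \<Longrightarrow> bracket_set scale n mul As s \<subseteq> T"
  unfolding bracket_set_def by (rule vs.span_minimal) blast+

lemma lin_span: assumes "Vector_Spaces.linear scale scale f" "vs.subspace T" "f ` X \<subseteq> T" "x \<in> vs.span X"
  shows "f x \<in> T"
proof -
  interpret lf: Vector_Spaces.linear scale scale f by fact
  have "f x \<in> f ` vs.span X" using assms(4) by blast
  also have "\<dots> = vs.span (f ` X)" using lf.span_image by simp
  also have "\<dots> \<subseteq> T" using assms(2,3) vs.span_minimal by blast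
  finally show ?thesis .
qed

lemma multilin:
  assumes T: "vs.subspace T" and len: "length As = n"
    and base: "\<And>ys. length ys = n \<Longrightarrow> (\<forall>r<n. ys ! r \<in> As ! r) \<Longrightarrow> mul ys \<in> T"
  shows "length xs = n \<Longrightarrow> (\<forall>r<n. xs ! r \<in> vs.span (As ! r)) \<Longrightarrow> mul xs \<in> T"
proof -
  have "\<forall>xs. length xs = n \<and> (\<forall>r<n. (r < m \<longrightarrow> xs ! r \<in> vs.span (As ! r)) \<and> (m \<le> r \<longrightarrow> xs ! r \<in> As ! r))
     \<longrightarrow> mul xs \<in> T" for m
  proof (induction m)
    case 0
    then show ?case using base by auto
  next
    case (Suc m)
    show ?case
    proof (intro allI impI)
      fix xs assume H: "length xs = n \<and> (\<forall>r<n. (r < Suc m \<longrightarrow> xs ! r \<in> vs.span (As ! r)) \<and> (Suc m \<le> r \<longrightarrow> xs ! r \<in> As ! r))"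
      show "mul xs \<in> T"
      proof (cases "m < n")
        case False
        then show ?thesis using Suc.IH H by auto
      next
        case True
        let ?f = "\<lambda>x. mul (xs[m := x])"
        have "?f ` (As ! m) \<subseteq> T"
        proof
          fix y assume "y \<in> ?f ` (As ! m)"
          then obtain a where a: "a \<in> As ! m" "y = ?f a" by blast
          have "mul (xs[m := a]) \<in> T" using Suc.IH H a True by (auto simp: nth_list_update)
          then show "y \<in> T" using a by simp
        qed
        moreover have "xs ! m \<in> vs.span (As ! m)" using H True by auto
        ultimately have "?f (xs ! m) \<in> T" using lin_span[OF lin T] H True by blast
        then show ?thesis by simp
      qed
    qed
  qed
  from this[of n] show "length xs = n \<Longrightarrow> (\<forall>r<n. xs ! r \<in> vs.span (As ! r)) \<Longrightarrow> mul xs \<in> T" by auto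
qed

lemma perm_gen:
  assumes "length L = n" "\<And>t. t < n \<Longrightarrow> xs ! t \<in> u_set V e (L ! t)" "length xs = n" "mset N = mset L"
  shows "\<exists>\<sigma>. \<sigma> permutes {..<n} \<and> permute_list \<sigma> N = L \<and> mul xs \<in> bracket_set scale n mul (map (u_set V e) N) \<sigma>"
proof -
  obtain \<sigma> where s: "\<sigma> permutes {..<length N}" "permute_list \<sigma> N = L"
    using mset_eq_permutation[of L N] assms(4) by metis
  have lN: "length N = n" using assms(1,4) mset_eq_length by metis
  have si: "inv \<sigma> permutes {..<n}" using permutes_inv s(1) lN by metis
  define xs' where "xs' = permute_list (inv \<sigma>) xs"
  have "permute_list \<sigma> xs' = permute_list (inv \<sigma> \<circ> \<sigma>) xs"
    unfolding xs'_def by (rule permute_list_compose[symmetric]) (use s(1) lN assms(3) in simp)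
  also have "\<dots> = xs" using permutes_inv_o(2)[OF s(1)] by simp
  finally have px: "permute_list \<sigma> xs' = xs" .
  have "mul (perm_list \<sigma> xs') \<in> bracket_set scale n mul (map (u_set V e) N) \<sigma>"
  proof (rule bracket_gen)
    show "length xs' = n" unfolding xs'_def using assms(3) by simp
    fix r assume r: "r < n"
    have ir: "inv \<sigma> r < n" using permutes_in_image[OF si] r by simp
    have "xs' ! r = xs ! (inv \<sigma> r)" unfolding xs'_def using permute_list_nth[of "inv \<sigma>" xs r] si r assms(3) by simp
    moreover have "L ! (inv \<sigma> r) = N ! r"
      using s permute_list_nth[of \<sigma> N "inv \<sigma> r"] ir lN permutes_inverses(1)[OF s(1)] by simp
    ultimately show "xs' ! r \<in> map (u_set V e) N ! r" using assms(2)[OF ir] r lN by simp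
  qed
  then show ?thesis using px s lN unfolding perm_list_eq by auto
qed


lemma phi_iter_snoc: "phi_iter scale n mul V e J (Xs @ [X]) = phi scale n mul V e (phi_iter scale n mul V e J Xs) X"
  by (induction Xs arbitrary: J) auto

lemma phi_mono: "J \<subseteq> J' \<Longrightarrow> J \<noteq> {} \<Longrightarrow> phi scale n mul V e J X \<subseteq> phi scale n mul V e J' X"
  unfolding phi_def Let_def by auto

lemma phi_PlBr: "Pl c \<in> phi scale n mul V e J X \<Longrightarrow> Br c \<in> phi scale n mul V e J X"
  unfolding phi_def Let_def by (auto split: if_splits)

lemma phi_iter_PlBr: "Xs \<noteq> [] \<Longrightarrow> Pl c \<in> phi_iter scale n mul V e J Xs \<Longrightarrow> Br c \<in> phi_iter scale n mul V e J Xs"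
  by (induction Xs rule: rev_induct) (auto simp: phi_iter_snoc intro: phi_PlBr)

lemma phi_intro: "Ix r \<in> mu scale n mul V e (br_ix it) X \<Longrightarrow> Pl r \<in> phi scale n mul V e {it} X"
  unfolding phi_def Let_def by auto

lemma conn_step:
  assumes "connected scale n mul V e i c" "tuple_ok n X" "it \<in> {Pl c, Br c}" "Pl r \<in> phi scale n mul V e {it} X"
  shows "connected scale n mul V e i r"
proof (cases "i = c")
  case True
  then show ?thesis using assms unfolding connected_def
    by (intro disjI2 exI[of _ "[X]"] exI[of _ it]) auto
next
  case False
  then obtain Xs it0 where H: "Xs \<noteq> []" "\<forall>X\<in>set Xs. tuple_ok n X" "it0 \<in> {Pl i, Br i}"
    "\<forall>s. 1 \<le> s \<and> s < length Xs \<longrightarrow> phi_iter scale n mul V e {it0} (take s Xs) \<noteq> {}"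
    "Pl c \<in> phi_iter scale n mul V e {it0} Xs"
    using assms(1) unfolding connected_def by blast
  have "it \<in> phi_iter scale n mul V e {it0} Xs" using assms(3) H(1,5) phi_iter_PlBr by blast
  then have "Pl r \<in> phi_iter scale n mul V e {it0} (Xs @ [X])"
    using phi_mono[of "{it}" "phi_iter scale n mul V e {it0} Xs" X] assms(4) by (auto simp: phi_iter_snoc)
  moreover have "phi_iter scale n mul V e {it0} (take s (Xs @ [X])) \<noteq> {}" if "1 \<le> s" "s < length (Xs @ [X])" for s
  proof (cases "s < length Xs")
    case True then show ?thesis using H(4) that by simp
  next
    case False then have "s = length Xs" using that by simp
    then show ?thesis using H(5) by auto
  qed
  ultimately show ?thesis unfolding connected_def using H(1,2,3) assms(2)
    by (intro disjI2 exI[of _ "Xs @ [X]"] exI[of _ it0]) auto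
qed

end


context ctx begin
lemma bracket_perm:
  assumes "\<tau> permutes {..<n}" "\<sigma> permutes {..<n}" "length A' = n"
  shows "bracket_set scale n mul (permute_list \<tau> A') \<sigma> \<subseteq> bracket_set scale n mul A' (\<tau> \<circ> \<sigma>)"
proof (rule bracket_sub)
  show "vs.subspace (bracket_set scale n mul A' (\<tau> \<circ> \<sigma>))" unfolding bracket_set_def by simp
  fix xs assume xs: "length xs = n" "\<forall>r<n. xs ! r \<in> permute_list \<tau> A' ! r"
  have ti: "inv \<tau> permutes {..<n}" using permutes_inv assms(1) by blast
  define xs' where "xs' = permute_list (inv \<tau>) xs"
  have "permute_list \<tau> xs' = permute_list (inv \<tau> \<circ> \<tau>) xs"
    unfolding xs'_def by (rule permute_list_compose[symmetric]) (use assms xs in simp)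
  also have "\<dots> = xs" using permutes_inv_o(2)[OF assms(1)] by simp
  finally have px: "permute_list \<tau> xs' = xs" .
  have "mul (perm_list (\<tau> \<circ> \<sigma>) xs') \<in> bracket_set scale n mul A' (\<tau> \<circ> \<sigma>)"
  proof (rule bracket_gen)
    show "length xs' = n" unfolding xs'_def using xs by simp
    fix r assume r: "r < n"
    have ir: "inv \<tau> r < n" using permutes_in_image[OF ti] r by simp
    have "xs' ! r = xs ! (inv \<tau> r)" unfolding xs'_def using permute_list_nth[of "inv \<tau>" xs r] ti r xs by simp
    moreover have "permute_list \<tau> A' ! (inv \<tau> r) = A' ! r"
      using permute_list_nth[of \<tau> A' "inv \<tau> r"] assms ir permutes_inverses(1)[OF assms(1)] by simp
    ultimately show "xs' ! r \<in> A' ! r" using xs ir by metis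
  qed
  moreover have "perm_list (\<tau> \<circ> \<sigma>) xs' = perm_list \<sigma> xs"
    unfolding perm_list_eq using permute_list_compose[of \<sigma> xs' \<tau>] assms xs px unfolding xs'_def by simp
  ultimately show "mul (perm_list \<sigma> xs) \<in> bracket_set scale n mul A' (\<tau> \<circ> \<sigma>)" by simp
qed

lemma bracket_single:
  assumes "Vx \<notin> set N" "length N = n"
  shows "bracket_set scale n mul (map (u_set V e) N) \<sigma> \<subseteq> vs.span {mul (perm_list \<sigma> (map (\<lambda>x. e (getI x)) N))}"
proof (rule bracket_sub)
  fix xs assume xs: "length xs = n" "\<forall>r<n. xs ! r \<in> map (u_set V e) N ! r"
  have "xs = map (\<lambda>x. e (getI x)) N"
  proof (rule nth_equalityI)
    fix r assume "r < length xs"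
    then have "r < n" using xs by simp
    moreover have "N ! r \<in> set N" using \<open>r < n\<close> assms by (intro nth_mem) simp
    ultimately have "N ! r \<noteq> Vx" using assms(1) by metis
    then show "xs ! r = map (\<lambda>x. e (getI x)) N ! r" using xs assms \<open>r < n\<close> by (cases "N ! r") auto
  qed (use xs assms in simp)
  then show "mul (perm_list \<sigma> xs) \<in> vs.span {mul (perm_list \<sigma> (map (\<lambda>x. e (getI x)) N))}"
    by (simp add: vs.span_base)
qed simp

lemma line_sub: "line scale x \<subseteq> vs.span X" if "x \<in> X"
  unfolding line_span using that by (simp add: vs.span_mono)

lemma line_W: "line scale (e r) \<subseteq> W" using line_sub[of "e r" "range e"] espan by simp

end

locale ctxC = ctx +
  fixes C :: "'i set"
  assumes closed: "\<And>c X it r. c \<in> C \<Longrightarrow> tuple_ok n X \<Longrightarrow> it \<in> {Pl c, Br c} \<Longrightarrow> Pl r \<in> phi scale n mul V e {it} X \<Longrightarrow> r \<in> C"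
begin

definition "G = {mul (map e js) | js. length js = n \<and> set js \<subseteq> C \<and> mul (map e js) \<in> V}"
definition "S = vs.span (e ` C \<union> G)"

lemma S_sub: "vs.subspace S" unfolding S_def by simp

lemma lineC: "r \<in> C \<Longrightarrow> line scale (e r) \<subseteq> S" unfolding S_def by (rule line_sub) auto

lemma a_line: "B = bracket_set scale n mul (map (u_set V e) N) \<sigma> \<Longrightarrow> x \<in> B \<Longrightarrow> x \<noteq> 0 \<Longrightarrow> B \<subseteq> line scale (e j)
   \<Longrightarrow> Ix j \<in> a_map scale n mul V e \<sigma> N"
  unfolding a_map_def Let_def by auto

lemma lemA:
  assumes xs: "length xs = n" "\<forall>t<n. xs ! t \<in> range e \<union> V" and p: "p < n" "xs ! p = e c" and c: "c \<in> C"
  shows "mul xs \<in> S"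
proof (cases "mul xs = 0")
  case True then show ?thesis using S_sub vs.subspace_0 by simp
next
  case nz: False
  define ixo where "ixo x = (if x \<in> V then Vx else Ix (inv e x))" for x
  define L where "L = map ixo xs"
  have lL: "length L = n" using xs L_def by simp
  have xL: "xs ! t \<in> u_set V e (L ! t)" if "t < n" for t
  proof (cases "xs ! t \<in> V")
    case True then show ?thesis using that xs unfolding L_def ixo_def by simp
  next
    case False then have "xs ! t \<in> range e" using that xs by auto
    then show ?thesis using that xs False unfolding L_def ixo_def by (simp add: f_inv_into_f)
  qed
  have Lp: "L ! p = Ix c" using p xs e_notV einj unfolding L_def ixo_def by simp
  have cL: "Ix c \<in> set L" using Lp p lL by (metis nth_mem)
  define M where "M = Ix c # remove1 (Ix c) L"
  have mM: "mset M = mset L" using cL unfolding M_def by simp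
  obtain \<sigma> where sg: "\<sigma> permutes {..<n}" "permute_list \<sigma> M = L" "mul xs \<in> bracket_set scale n mul (map (u_set V e) M) \<sigma>"
    using perm_gen[OF lL xL xs(1) mM] by blast
  have lM: "length M = n" using mM lL mset_eq_length by metis
  have tokM: "tuple_ok n (Pl (remove1 (Ix c) L))" using lL cL by (simp add: length_remove1)
  have lineCase: "mul xs \<in> S" if B: "bracket_set scale n mul (map (u_set V e) M) \<sigma> \<subseteq> line scale (e j)" for j
  proof -
    have "Ix j \<in> a_map scale n mul V e \<sigma> M" using a_line[OF refl sg(3) nz B] .
    then have "Ix j \<in> mu scale n mul V e (br_ix (Pl c)) (Pl (remove1 (Ix c) L))"
      using sg(1) unfolding M_def by auto
    then have "Pl j \<in> phi scale n mul V e {Pl c} (Pl (remove1 (Ix c) L))" by (rule phi_intro)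
    then have "j \<in> C" using closed[OF c tokM] by blast
    then show ?thesis using lineC B sg(3) by blast
  qed
  show ?thesis
  proof (cases "Vx \<in> set L")
    case True
    define F where "F = filter (\<lambda>x. x \<noteq> Vx) M"
    define Vs where "Vs = filter (\<lambda>x. \<not> x \<noteq> Vx) M"
    define A' where "A' = map (\<lambda>i. {e i}) (map getI F) @ replicate (length Vs) V"
    have FVs: "length F + length Vs = n" unfolding F_def Vs_def using sum_length_filter_compl[of "\<lambda>x. x \<noteq> Vx" M] lM by simp
    have "map (\<lambda>i. {e i}) (map getI F) = map (u_set V e) F"
      unfolding F_def
    proof (induction M)
      case (Cons a M) then show ?case by (cases a) auto
    qed simp
    moreover have "replicate (length Vs) V = map (u_set V e) Vs"
      unfolding Vs_def by (induction M) auto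
    ultimately have A'eq: "A' = map (u_set V e) F @ map (u_set V e) Vs" unfolding A'_def by simp
    have "mset M = mset F + mset Vs" unfolding F_def Vs_def mset_filter by (rule multiset_partition)
    then have mA: "mset (map (u_set V e) M) = mset A'" unfolding A'eq by simp
    have lA: "length A' = n" using A'eq FVs by simp
    obtain \<tau> where tau: "\<tau> permutes {..<length A'}" "permute_list \<tau> A' = map (u_set V e) M"
      using mset_eq_permutation[OF mA] by metis
    have tn: "\<tau> permutes {..<n}" using tau(1) lA by simp
    have k0: "0 < length F" unfolding F_def M_def by simp
    have "Vx \<in> set Vs" using True unfolding Vs_def M_def by simp
    then have kn: "length F < n" using FVs by (cases Vs) auto
    obtain j where j: "bracket_set scale n mul (map (\<lambda>i. {e i}) (map getI F) @ replicate (n - length F) V) (\<tau> \<circ> \<sigma>) \<subseteq> line scale (e j)"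
      using q2[OF k0 kn _ permutes_compose[OF sg(1) tn], of "map getI F"] by auto
    have "bracket_set scale n mul (map (u_set V e) M) \<sigma> \<subseteq> bracket_set scale n mul A' (\<tau> \<circ> \<sigma>)"
      using bracket_perm[of \<tau> \<sigma> A'] tau sg(1) lA by simp
    also have "A' = map (\<lambda>i. {e i}) (map getI F) @ replicate (n - length F) V" unfolding A'_def using FVs by simp
    finally show ?thesis using lineCase j by blast
  next
    case False
    have xe: "xs ! t \<in> range e" if "t < n" for t
    proof -
      have "L ! t \<in> set L" using that lL by simp
      then have "L ! t \<noteq> Vx" using False by metis
      then obtain i where "L ! t = Ix i" by (cases "L ! t") auto
      then show ?thesis using xL[OF that] by auto
    qed
    define js where "js = map (inv e) xs"
    have xsjs: "xs = map e js"
    proof (rule nth_equalityI)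
      fix t assume "t < length xs"
      then show "xs ! t = map e js ! t" unfolding js_def using xe[of t] xs(1) by (simp add: f_inv_into_f)
    qed (simp add: js_def)
    have ix: "ixo (xs ! t) = Ix (inv e (xs ! t))" if "t < n" for t
      using xe[OF that] e_notV unfolding ixo_def by auto
    have Ljs: "L = map Ix js"
    proof (rule nth_equalityI)
      fix t assume "t < length L"
      then show "L ! t = map Ix js ! t" unfolding L_def js_def using ix[of t] xs(1) by simp
    qed (simp add: L_def js_def)
    have pm: "perm_list \<sigma> (map (\<lambda>x. e (getI x)) M') = xs" if "permute_list \<sigma> M' = L" "length M' = n" for M'
      unfolding perm_list_eq using permute_list_map[of \<sigma> M' "\<lambda>x. e (getI x)"] that sg(1) Ljs xsjs
      by simp
    have lj: "length js = n" using xs js_def by simp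
    from q1[OF lj] show ?thesis
    proof
      assume "\<exists>j. mul (map e js) \<in> line scale (e j)"
      then obtain j where j: "mul xs \<in> line scale (e j)" using xsjs by auto
      have "bracket_set scale n mul (map (u_set V e) M) \<sigma> \<subseteq> vs.span {mul xs}"
        using bracket_single[of M \<sigma>] pm[OF sg(2) lM] lM False mM by (metis set_mset_mset)
      also have "\<dots> \<subseteq> line scale (e j)" using j unfolding line_span by (simp add: vs.span_minimal)
      finally show ?thesis using lineCase by blast
    next
      assume xV: "mul (map e js) \<in> V"
      have "js ! t \<in> C" if t: "t < n" for t
      proof (cases "js ! t = c")
        case True then show ?thesis using c by simp
      next
        case dc: False
        define d where "d = js ! t"
        define rest where "rest = remove1 (Ix d) (remove1 (Ix c) L)"
        define N where "N = Ix d # Ix c # rest"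
        have dL: "Ix d \<in> set L" using t lj Ljs d_def by simp
        have d2: "Ix d \<in> set (remove1 (Ix c) L)" using dL dc d_def by (simp add: in_set_remove1)
        have m1: "mset (Ix d # rest) = mset (remove1 (Ix c) L)" unfolding rest_def using d2
          by (metis mset.simps(2) mset_remove1 insert_DiffM set_mset_mset)
        have m2: "mset (Ix c # remove1 (Ix c) L) = mset L" using cL
          by (metis mset.simps(2) mset_remove1 insert_DiffM set_mset_mset)
        have mN: "mset N = mset L" unfolding N_def using m1 m2 by (metis add_mset_commute mset.simps(2))
        obtain \<sigma>' where sg': "\<sigma>' permutes {..<n}" "permute_list \<sigma>' N = L" "mul xs \<in> bracket_set scale n mul (map (u_set V e) N) \<sigma>'"
          using perm_gen[OF lL xL xs(1) mN] by blast
        have lN: "length N = n" using mN lL mset_eq_length by metis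
        have VN: "Vx \<notin> set N" using False mN by (metis set_mset_mset)
        have pm': "perm_list \<sigma>' (map (\<lambda>x. e (getI x)) N) = xs"
          unfolding perm_list_eq using permute_list_map[of \<sigma>' N "\<lambda>x. e (getI x)"] sg' lN Ljs xsjs by simp
        let ?B = "bracket_set scale n mul (map (u_set V e) N) \<sigma>'"
        have BV: "?B \<subseteq> V" using bracket_single[OF VN lN, of \<sigma>'] pm' xV xsjs vs.span_minimal Vsub
          by (metis empty_subsetI insert_subset subset_trans)
        have nl: "\<not> ?B \<subseteq> line scale (e r)" for r
          using sg'(3) line_W[of r] BV VW0 nz by blast
        have "a_map scale n mul V e \<sigma>' N = {Vx}" unfolding a_map_def Let_def using BV nl sg'(3) nz by auto
        then have "Ix d \<in> b_map scale n mul V e \<sigma>' Vx (Ix c # rest)" unfolding b_map_def N_def by simp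
        moreover have "0 < n - 1" using n2 by simp
        ultimately have "Ix d \<in> mu scale n mul V e (br_ix (Br c)) (Pl (Vx # rest))"
          using sg'(1) by (auto intro!: bexI[of _ 0])
        then have "Pl d \<in> phi scale n mul V e {Br c} (Pl (Vx # rest))" by (rule phi_intro)
        moreover have "tuple_ok n (Pl (Vx # rest))" using lN unfolding N_def by simp
        ultimately show ?thesis using closed[OF c] d_def by blast
      qed
      then have "set js \<subseteq> C" using lj by (auto simp: in_set_conv_nth)
      then have "mul xs \<in> G" unfolding G_def using xsjs lj xV by blast
      then show ?thesis unfolding S_def by (simp add: vs.span_base)
    qed
  qed
qed

end


context ctxC begin
lemma G_V: "G \<subseteq> V" unfolding G_def by blast

lemma lemC:
  assumes xs: "length xs = n" "p < n" "\<forall>t<n. t \<noteq> p \<longrightarrow> xs ! t \<in> e ` C" and q: "q \<in> S"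
  shows "mul (xs[p := q]) \<in> S"
proof -
  define t0 :: nat where "t0 = (if p = 0 then 1 else 0)"
  have t0: "t0 < n" "t0 \<noteq> p" using n2 xs(2) unfolding t0_def by auto
  obtain c0 where c0: "xs ! t0 = e c0" "c0 \<in> C" using xs(3) t0 by blast
  have "(\<lambda>x. mul (xs[p := x])) ` (e ` C \<union> G) \<subseteq> S"
  proof
    fix y assume "y \<in> (\<lambda>x. mul (xs[p := x])) ` (e ` C \<union> G)"
    then obtain a where a: "a \<in> e ` C \<union> G" "y = mul (xs[p := a])" by blast
    have "mul (xs[p := a]) \<in> S"
    proof (rule lemA)
      show "length (xs[p := a]) = n" using xs by simp
      show "\<forall>t<n. xs[p := a] ! t \<in> range e \<union> V"
      proof (intro allI impI)
        fix t assume t: "t < n"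
        show "xs[p := a] ! t \<in> range e \<union> V"
        proof (cases "t = p")
          case True then show ?thesis using a(1) G_V xs by auto
        next
          case False then show ?thesis using xs t by auto
        qed
      qed
      show "t0 < n" by (rule t0)
      show "xs[p := a] ! t0 = e c0" using t0 c0 by simp
      show "c0 \<in> C" by (rule c0)
    qed
    then show "y \<in> S" using a by simp
  qed
  then show ?thesis using lin_span[OF lin[OF xs(1,2)] S_sub] q unfolding S_def by blast
qed

lemma lemB:
  assumes js: "length js = n" "set js \<subseteq> C" and ys: "length ys = n - 1"
    "\<forall>y\<in>set ys. y \<in> range e \<union> V \<and> (\<exists>g. y \<in> Lg g)" and k: "k < n"
  shows "mul (take k ys @ [mul (map e js)] @ drop k ys) \<in> S"
proof -
  define xs where "xs = map e js"
  define dxs where "dxs = map (\<lambda>j. SOME g. e j \<in> Lg g) js"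
  define dys where "dys = map (\<lambda>y. SOME g. y \<in> Lg g) ys"
  have hx: "\<forall>t<n. xs ! t \<in> Lg (dxs ! t)" unfolding xs_def dxs_def using js ehom by (auto intro: someI_ex)
  have hy: "\<forall>t<n - 1. ys ! t \<in> Lg (dys ! t)" unfolding dys_def using ys by (auto intro: someI_ex)
  have eq: "mul (take k ys @ [mul xs] @ drop k ys) =
        (\<Sum>i<n. \<Sum>j<n. \<Sum>s1\<in>{s. s permutes {..<n}}. \<Sum>s2\<in>{s. s permutes {..<n - 1}}.
           scale (alpha i j k s1 s2 * koszul eps (take k dys @ dxs @ drop k dys) (rhs_order n k i j s1 s2))
             (let xs' = perm_list s1 xs; ys' = perm_list s2 ys in
              mul (take i xs' @ [mul (take j ys' @ [xs' ! i] @ drop j ys')] @ drop (Suc i) xs')))"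
    by (rule ident[OF k]) (use js ys hx hy in \<open>simp_all add: xs_def dxs_def dys_def\<close>)
  have trm: "(let xs' = perm_list s1 xs; ys' = perm_list s2 ys in
              mul (take i xs' @ [mul (take j ys' @ [xs' ! i] @ drop j ys')] @ drop (Suc i) xs')) \<in> S"
    if i: "i < n" and j: "j < n" and s1: "s1 permutes {..<n}" and s2: "s2 permutes {..<n - 1}" for i j s1 s2
  proof -
    define xs' where "xs' = perm_list s1 xs"
    define ys' where "ys' = perm_list s2 ys"
    have lx': "length xs' = n" unfolding xs'_def xs_def perm_list_eq using js by simp
    have xs'C: "xs' ! t \<in> e ` C" if "t < n" for t
    proof -
      have "xs' ! t = xs ! s1 t" unfolding xs'_def perm_list_eq using permute_list_nth[of s1 xs t] s1 js that
        by (simp add: xs_def)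
      moreover have "s1 t < n" using permutes_in_image[OF s1] that by simp
      moreover have "js ! s1 t \<in> set js" using \<open>s1 t < n\<close> js(1) by (intro nth_mem) simp
      ultimately have "xs' ! t = e (js ! s1 t)" "js ! s1 t \<in> C" using js unfolding xs_def by auto
      then show ?thesis by blast
    qed
    have sy': "set ys' = set ys" unfolding ys'_def perm_list_eq using s2 ys by simp
    have ly': "length ys' = n - 1" unfolding ys'_def perm_list_eq using ys by simp
    define QL where "QL = take j ys' @ [xs' ! i] @ drop j ys'"
    have lQ: "length QL = n" unfolding QL_def using ly' n2 by simp
    have pQ: "QL ! (length (take j ys')) = xs' ! i" unfolding QL_def by (simp add: nth_append)
    have plt: "length (take j ys') < n" using ly' n2 by simp
    obtain c0 where c0: "xs' ! i = e c0" "c0 \<in> C" using xs'C[OF i] by blast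
    have setQ: "set QL \<subseteq> set ys \<union> {xs' ! i}"
    proof -
      have "set QL = set (take j ys') \<union> {xs' ! i} \<union> set (drop j ys')" unfolding QL_def by simp
      then show ?thesis using sy' set_take_subset[of j ys'] set_drop_subset[of j ys'] by blast
    qed
    have H: "\<forall>t<n. QL ! t \<in> range e \<union> V"
    proof (intro allI impI)
      fix t assume "t < n"
      then have "QL ! t \<in> set QL" using lQ by simp
      then have "QL ! t \<in> set ys \<or> QL ! t = xs' ! i" using setQ by blast
      then show "QL ! t \<in> range e \<union> V" using ys(2) c0(1) by auto
    qed
    have pQ': "QL ! (length (take j ys')) = e c0" using pQ c0(1) by simp
    have "mul QL \<in> S" by (rule lemA[OF lQ H plt pQ' c0(2)])
    moreover have "\<forall>t<n. t \<noteq> i \<longrightarrow> xs' ! t \<in> e ` C" using xs'C by blast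
    ultimately have "mul (xs'[i := mul QL]) \<in> S" using lemC[OF lx' i] by blast
    moreover have "xs'[i := mul QL] = take i xs' @ [mul QL] @ drop (Suc i) xs'"
      using upd_conv_take_nth_drop[of i xs' "mul QL"] lx' i by simp
    ultimately show ?thesis unfolding xs'_def ys'_def QL_def Let_def by simp
  qed
  have "(\<Sum>i<n. \<Sum>j<n. \<Sum>s1\<in>{s. s permutes {..<n}}. \<Sum>s2\<in>{s. s permutes {..<n - 1}}.
           scale (alpha i j k s1 s2 * koszul eps (take k dys @ dxs @ drop k dys) (rhs_order n k i j s1 s2))
             (let xs' = perm_list s1 xs; ys' = perm_list s2 ys in
              mul (take i xs' @ [mul (take j ys' @ [xs' ! i] @ drop j ys')] @ drop (Suc i) xs'))) \<in> S"
    by (intro vs.subspace_sum[OF S_sub] vs.subspace_scale[OF S_sub] trm; simp)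
  then have "mul (take k ys @ [mul xs] @ drop k ys) \<in> S" unfolding eq .
  then show ?thesis unfolding xs_def .
qed

end



fun unbr :: "'i br \<Rightarrow> 'i" where "unbr (Pl i) = i" | "unbr (Br i) = i"

context ctx begin

lemma graded_span: assumes "\<forall>x\<in>X. \<exists>g. x \<in> Lg g" shows "graded_subspace scale Lg (vs.span X)"
  unfolding graded_subspace_def
proof
  show "vs.subspace (vs.span X)" by simp
  have "X \<subseteq> (\<Union>g. vs.span X \<inter> Lg g)" using assms vs.span_superset by blast
  then have "vs.span X \<subseteq> vs.span (\<Union>g. vs.span X \<inter> Lg g)" by (rule vs.span_mono)
  moreover have "vs.span (\<Union>g. vs.span X \<inter> Lg g) \<subseteq> vs.span X" by (rule vs.span_minimal) auto
  ultimately show "vs.span X = vs.span (\<Union>g. vs.span X \<inter> Lg g)" by blast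
qed

lemma ideal_closed: "gLt_ideal scale Lg n mul T \<Longrightarrow> s permutes {..<n} \<Longrightarrow>
  bracket_set scale n mul (T # replicate (n - 1) UNIV) s \<subseteq> T"
  unfolding gLt_ideal_def by blast

lemma ideal_sub: "gLt_ideal scale Lg n mul T \<Longrightarrow> vs.subspace T"
  unfolding gLt_ideal_def graded_subspace_def by blast

lemma phi_step:
  assumes T: "gLt_ideal scale Lg n mul T" and J: "\<forall>x\<in>J. e (unbr x) \<in> T" and X: "tuple_ok n X"
    and x: "x \<in> phi scale n mul V e J X"
  shows "e (unbr x) \<in> T"
proof -
  have "J \<noteq> {}" using x unfolding phi_def by auto
  then have "\<exists>k. unbr x = k \<and> (\<exists>j\<in>J. Ix k \<in> mu scale n mul V e (br_ix j) X)"
    using x unfolding phi_def Let_def by auto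
  then obtain k j where kj: "unbr x = k" "j \<in> J" "Ix k \<in> mu scale n mul V e (br_ix j) X"
    by blast
  obtain s where s: "s permutes {..<n}" "e k \<in> bracket_set scale n mul (map (w_set V e) (br_ix j # unbar_list X)) s"
    using A3 X kj(3) unfolding mu_quasi_mult_def by blast
  have lu: "length (unbar_list X) = n - 1" using X by (cases X) auto
  have wj: "w_set V e (br_ix j) = {e (unbr j)}" by (cases j) auto
  have "bracket_set scale n mul (map (w_set V e) (br_ix j # unbar_list X)) s
      \<subseteq> bracket_set scale n mul (T # replicate (n - 1) UNIV) s"
  proof (rule bracket_mono)
    show "length (map (w_set V e) (br_ix j # unbar_list X)) = n" using lu n2 by simp
    show "length (T # replicate (n - 1) UNIV) = n" using n2 by simp
    fix r assume "r < n"
    show "map (w_set V e) (br_ix j # unbar_list X) ! r \<subseteq> (T # replicate (n - 1) UNIV) ! r"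
    proof (cases r)
      case 0 then show ?thesis using wj J kj(2) by simp
    next
      case (Suc r') then show ?thesis using \<open>r < n\<close> lu by simp
    qed
  qed
  then show ?thesis using s ideal_closed[OF T s(1)] kj(1) by blast
qed

lemma chain: "gLt_ideal scale Lg n mul T \<Longrightarrow> \<forall>x\<in>J. e (unbr x) \<in> T \<Longrightarrow> \<forall>X\<in>set Xs. tuple_ok n X \<Longrightarrow>
   \<forall>x\<in>phi_iter scale n mul V e J Xs. e (unbr x) \<in> T"
proof (induction Xs arbitrary: J)
  case Nil then show ?case by simp
next
  case (Cons X Xs)
  have "\<forall>x\<in>phi scale n mul V e J X. e (unbr x) \<in> T" using phi_step Cons.prems by auto
  then show ?case using Cons by simp
qed

lemma suff:
  assumes conn: "\<forall>i j. connected scale n mul V e i j" and T0: "T \<noteq> {0}" and T: "gLt_ideal scale Lg n mul T"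
    and inh: "inherited_basis_ideal scale Lg V W e T"
  shows "T = UNIV"
proof -
  obtain VS WS J where H: "graded_subspace scale Lg VS" "WS \<noteq> {0}" "WS = vs.span (e ` J)"
    "T = {v + w | v w. v \<in> VS \<and> w \<in> WS}"
    using inh unfolding inherited_basis_ideal_def by blast
  have Tsub: "vs.subspace T" by (rule ideal_sub[OF T])
  have "J \<noteq> {}" using H(2,3) by auto
  then obtain i where i: "i \<in> J" by blast
  have "0 \<in> VS" using H(1) vs.subspace_0 unfolding graded_subspace_def by blast
  moreover have "e i \<in> WS" using H(3) i vs.span_base by blast
  ultimately have ei: "e i \<in> T" using H(4) by force
  have ej: "e j \<in> T" for j
  proof (cases "i = j")
    case True then show ?thesis using ei by simp
  next
    case False
    then obtain Xs it where X: "\<forall>X\<in>set Xs. tuple_ok n X" "it \<in> {Pl i, Br i}"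
      "Pl j \<in> phi_iter scale n mul V e {it} Xs"
      using conn unfolding connected_def by blast
    have "\<forall>x\<in>{it}. e (unbr x) \<in> T" using X(2) ei by auto
    then have "\<forall>x\<in>phi_iter scale n mul V e {it} Xs. e (unbr x) \<in> T" using chain[OF T _ X(1)] by blast
    then show ?thesis using X(3) by force
  qed
  have WT: "W \<subseteq> T" using espan vs.span_minimal[OF _ Tsub] ej by blast
  have VT: "V \<subseteq> T"
  proof (cases "V = {0}")
    case True then show ?thesis using vs.subspace_0[OF Tsub] by simp
  next
    case False
    then have Veq: "V = vs.span {mul (map e (i # is)) | i is. length is = n - 1 \<and>
                               mu scale n mul V e (Pl (Ix i)) (Pl (map Ix is)) = {Vx}}"
      using A4 unfolding tight_def by blast
    show ?thesis
    proof (subst Veq, rule vs.span_minimal[OF _ Tsub], safe)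
      fix i' :: 'i and "is" :: "'i list" assume l: "length is = n - 1"
      have "mul (perm_list id (map e (i' # is))) \<in> bracket_set scale n mul (T # replicate (n - 1) UNIV) id"
      proof (rule bracket_gen)
        show "length (map e (i' # is)) = n" using l n2 by simp
        fix r assume "r < n"
        then show "map e (i' # is) ! r \<in> (T # replicate (n - 1) UNIV) ! r" using ej by (cases r) auto
      qed
      then show "mul (map e (i' # is)) \<in> T" using ideal_closed[OF T permutes_id] unfolding perm_list_eq by auto
    qed
  qed
  show ?thesis
  proof
    show "UNIV \<subseteq> T"
    proof
      fix x :: 'v
      obtain v w where "x = v + w" "v \<in> V" "w \<in> W" using VWU by blast
      then show "x \<in> T" using VT WT vs.subspace_add[OF Tsub] by blast
    qed
  qed simp
qed

end

context ctxC begin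

lemma hom_gen: "\<forall>x\<in>e ` C \<union> G. \<exists>g. x \<in> Lg g"
proof
  fix x assume "x \<in> e ` C \<union> G"
  then show "\<exists>g. x \<in> Lg g"
  proof
    assume "x \<in> e ` C" then show ?thesis using ehom by blast
  next
    assume "x \<in> G"
    then obtain js where js: "x = mul (map e js)" "length js = n" unfolding G_def by blast
    define gs where "gs = map (\<lambda>j. SOME g. e j \<in> Lg g) js"
    have "\<forall>r<n. map e js ! r \<in> Lg (gs ! r)" unfolding gs_def using js(2) ehom by (auto intro: someI_ex)
    then have "mul (map e js) \<in> Lg (sum_list gs)" using hom[of "map e js" gs] js(2) gs_def by simp
    then show ?thesis using js(1) by blast
  qed
qed

lemma S_graded: "graded_subspace scale Lg S" unfolding S_def by (rule graded_span[OF hom_gen])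

lemma UNIV_span: "UNIV = vs.span (range e \<union> (\<Union>g. V \<inter> Lg g))"
proof -
  have "x \<in> vs.span (range e \<union> (\<Union>g. V \<inter> Lg g))" for x
  proof -
    obtain v w where vw: "x = v + w" "v \<in> V" "w \<in> W" using VWU by blast
    have "v \<in> vs.span (range e \<union> (\<Union>g. V \<inter> Lg g))" using vw(2) Vgr vs.span_mono[of "\<Union>g. V \<inter> Lg g"] by blast
    moreover have "w \<in> vs.span (range e \<union> (\<Union>g. V \<inter> Lg g))" using vw(3) espan vs.span_mono[of "range e"] by blast
    ultimately show ?thesis using vw(1) vs.span_add by blast
  qed
  then show ?thesis by blast
qed

lemma S_closed: assumes s: "s permutes {..<n}"
  shows "bracket_set scale n mul (S # replicate (n - 1) UNIV) s \<subseteq> S"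
proof (rule bracket_sub[OF S_sub])
  fix xs assume xs: "length xs = n" "\<forall>r<n. xs ! r \<in> (S # replicate (n - 1) UNIV) ! r"
  define L where "L = perm_list s xs"
  define k where "k = inv s 0"
  have k: "k < n" "s k = 0" unfolding k_def using permutes_in_image[OF permutes_inv[OF s], of 0] n2
      permutes_inverses(1)[OF s] by auto
  have lL: "length L = n" unfolding L_def perm_list_eq using xs by simp
  have x0: "xs ! 0 \<in> S" using xs(2)[rule_format, of 0] n2 by simp
  have Lk: "L ! k \<in> S" unfolding L_def perm_list_eq using permute_list_nth[of s xs k] s xs k x0 by simp
  define As where "As = map (\<lambda>t. if t = k then e ` C \<union> G else range e \<union> (\<Union>g. V \<inter> Lg g)) [0..<n]"
  have lA: "length As = n" unfolding As_def by simp
  have "mul L \<in> S"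
  proof (rule multilin[OF S_sub lA _ lL])
    show "\<forall>r<n. L ! r \<in> vs.span (As ! r)"
    proof (intro allI impI)
      fix r assume r: "r < n"
      show "L ! r \<in> vs.span (As ! r)"
      proof (cases "r = k")
        case True then show ?thesis using Lk r unfolding As_def S_def by simp
      next
        case False then show ?thesis using r UNIV_span unfolding As_def by simp
      qed
    qed
  next
    fix ys assume ys: "length ys = n" "\<forall>r<n. ys ! r \<in> As ! r"
    have yk: "ys ! k \<in> e ` C \<union> G" using ys(2)[rule_format, OF k(1)] k(1) unfolding As_def by simp
    have yr: "ys ! r \<in> range e \<union> (\<Union>g. V \<inter> Lg g)" if "r < n" "r \<noteq> k" for r
      using ys(2)[rule_format, OF that(1)] that unfolding As_def by simp
    have yr2: "ys ! r \<in> range e \<union> V" if "r < n" for r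
      using yr[OF that] yk G_V by (cases "r = k") auto
    from yk show "mul ys \<in> S"
    proof
      assume "ys ! k \<in> e ` C"
      then obtain c where "ys ! k = e c" "c \<in> C" by blast
      then show ?thesis using lemA[OF ys(1) _ k(1)] yr2 by blast
    next
      assume "ys ! k \<in> G"
      then obtain js where js: "ys ! k = mul (map e js)" "length js = n" "set js \<subseteq> C" unfolding G_def by blast
      define Y where "Y = take k ys @ drop (Suc k) ys"
      have lY: "length Y = n - 1" unfolding Y_def using ys k by simp
      have Yset: "\<forall>y\<in>set Y. y \<in> range e \<union> V \<and> (\<exists>g. y \<in> Lg g)"
      proof
        fix y assume "y \<in> set Y"
        then have "y \<in> set (take k ys) \<or> y \<in> set (drop (Suc k) ys)" unfolding Y_def by simp
        then obtain r where r: "r < n" "r \<noteq> k" "y = ys ! r"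
        proof
          assume "y \<in> set (take k ys)"
          then obtain r where "r < length (take k ys)" "take k ys ! r = y" by (auto simp: in_set_conv_nth)
          then have "r < k" "ys ! r = y" using ys(1) k(1) by auto
          then show ?thesis using that[of r] k(1) by simp
        next
          assume "y \<in> set (drop (Suc k) ys)"
          then obtain r where "r < length (drop (Suc k) ys)" "drop (Suc k) ys ! r = y" by (auto simp: in_set_conv_nth)
          then have "Suc k + r < n" "ys ! (Suc k + r) = y" using ys(1) k(1) by auto
          then show ?thesis using that[of "Suc k + r"] by simp
        qed
        have "y \<in> range e \<union> (\<Union>g. V \<inter> Lg g)" using yr[OF r(1,2)] r(3) by simp
        then show "y \<in> range e \<union> V \<and> (\<exists>g. y \<in> Lg g)"
        proof
          assume "y \<in> range e"
          then obtain i where "y = e i" by blast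
          then show ?thesis using ehom[of i] by blast
        next
          assume "y \<in> (\<Union>g. V \<inter> Lg g)"
          then show ?thesis by blast
        qed
      qed
      have "ys = take k ys @ [ys ! k] @ drop (Suc k) ys" using id_take_nth_drop[of k ys] ys k by simp
      also have "take k ys = take k Y" unfolding Y_def using ys k by simp
      also have "drop (Suc k) ys = drop k Y" unfolding Y_def using ys k by simp
      finally have "ys = take k Y @ [mul (map e js)] @ drop k Y" using js(1) by simp
      then show ?thesis using lemB[OF js(2,3) lY Yset k(1)] by simp
    qed
  qed
  then show "mul (perm_list s xs) \<in> S" unfolding L_def .
qed

lemma S_alt: "S = vs.span (G \<union> e ` C)" unfolding S_def by (simp add: Un_commute)

lemma S_ideal: "gLt_ideal scale Lg n mul S"
  unfolding gLt_ideal_def using S_graded S_closed by blast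

lemma S_inh: assumes "C \<noteq> {}" shows "inherited_basis_ideal scale Lg V W e S"
  unfolding inherited_basis_ideal_def
proof (intro exI conjI)
  show "graded_subspace scale Lg (vs.span G)" using graded_span hom_gen by blast
  show "graded_subspace scale Lg (vs.span (e ` C))" using graded_span hom_gen by blast
  show VS: "vs.span G \<subseteq> V" using vs.span_minimal[OF G_V Vsub] .
  show WS: "vs.span (e ` C) \<subseteq> W" using espan vs.span_mono[of "e ` C" "range e"] by blast
  obtain c where "c \<in> C" using assms by blast
  then have "e c \<in> vs.span (e ` C)" by (simp add: vs.span_base)
  then show "vs.span (e ` C) \<noteq> {0}" using e_ne0 by blast
  show "vs.span (e ` C) = vs.span (e ` C)" ..
  show "vs.span G \<inter> vs.span (e ` C) = {0}" using VS WS VW0 vs.span_zero by auto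
  show "S = {v + w |v w. v \<in> vs.span G \<and> w \<in> vs.span (e ` C)}" unfolding S_alt vs.span_Un ..
qed

lemma S_ne: assumes "C \<noteq> {}" shows "S \<noteq> {0}"
proof -
  obtain c where "c \<in> C" using assms by blast
  then have "e c \<in> S" unfolding S_def by (simp add: vs.span_base)
  then show ?thesis using e_ne0[of c] by blast
qed

lemma S_basis: assumes "e j \<in> S" shows "j \<in> C"
proof (rule ccontr)
  assume jC: "j \<notin> C"
  obtain v w where vw: "e j = v + w" "v \<in> vs.span G" "w \<in> vs.span (e ` C)"
    using assms unfolding S_alt vs.span_Un by blast
  have vV: "v \<in> V" using vw(2) vs.span_minimal[OF G_V Vsub] by blast
  have wW: "w \<in> W" using vw(3) espan vs.span_mono[of "e ` C" "range e"] by blast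
  have "v = e j - w" using vw(1) by (simp add: algebra_simps)
  moreover have "e j - w \<in> W" using e_W wW vs.subspace_diff[OF Wsub] by blast
  ultimately have "v = 0" using vV VW0 by blast
  then have "e j \<in> vs.span (e ` C)" using vw by simp
  moreover have "e ` C \<subseteq> range e - {e j}" using jC einj by (auto dest: injD)
  ultimately have "e j \<in> vs.span (range e - {e j})" using vs.span_mono by blast
  then show False using eind vs.dependent_def by blast
qed

end




theorem theorem4p3:
  fixes scale :: "'f::field \<Rightarrow> 'v::ab_group_add \<Rightarrow> 'v"
    and Lg :: "'g::ab_group_add \<Rightarrow> 'v set"
    and eps :: "'g \<Rightarrow> 'g \<Rightarrow> 'f"
    and n :: nat
    and mul :: "'v list \<Rightarrow> 'v"
    and alpha :: "nat \<Rightarrow> nat \<Rightarrow> nat \<Rightarrow> (nat \<Rightarrow> nat) \<Rightarrow> (nat \<Rightarrow> nat) \<Rightarrow> 'f"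
    and V W :: "'v set"
    and e :: "'i \<Rightarrow> 'v"
  assumes "color_gLt_algebra scale Lg eps n mul alpha"
    and "quasi_mult_basis scale Lg n mul V W e"
    and "mu_quasi_mult scale n mul V e"
    and "tight scale n mul V e"
  shows "minimal scale Lg n mul V W e \<longleftrightarrow> (\<forall>i j. connected scale n mul V e i j)"
proof -
  interpret ctx scale Lg eps n mul alpha V W e using assms by unfold_locales
  show ?thesis
  proof
    assume m: "minimal scale Lg n mul V W e"
    show "\<forall>i j. connected scale n mul V e i j"
    proof (intro allI)
      fix i j
      interpret C: ctxC scale Lg eps n mul alpha V W e "{x. connected scale n mul V e i x}"
        by unfold_locales (auto intro: conn_step)
      have ne: "{x. connected scale n mul V e i x} \<noteq> {}" unfolding connected_def by auto
      have "C.S = UNIV" using m C.S_ne[OF ne] C.S_ideal C.S_inh[OF ne] unfolding minimal_def by blast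
      then have "e j \<in> C.S" by simp
      then show "connected scale n mul V e i j" using C.S_basis by blast
    qed
  next
    assume "\<forall>i j. connected scale n mul V e i j"
    then show "minimal scale Lg n mul V W e" unfolding minimal_def using suff by blast
  qed
qed


end
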